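(* Let $A,B$ be elementary algebras. The vector space $A\otimes_k B$ with the bilinear multiplication determined by $$(a\otimes b)\cdot(a'\otimes b')=aa'\otimes b_1b'+aa'_1\otimes b_2b'=aa'\otimes bb'-aa'_2\otimes b_2b'\qquad(a,a'\in A,\ b,b'\in B)$$ is an associative unital $k$-algebra (with unit $1\otimes 1$).
   Context: $k$ is a field; algebras are finite-dimensional associative unital $k$-algebras. An algebra is elementary if all its simple modules are one-dimensional. For an elementary algebra $A$, $\mathrm{rad}(A)$ is its Jacobson radical and $\bar A$ is a fixed subalgebra of $A$ with $A=\bar A\oplus\mathrm{rad}(A)$ as vector spaces (so $\bar A\cong A/\mathrm{rad}(A)$ is a product of copies of $k$; e.g. the span of the trivial paths when $A$ is given by a quiver with relations). For $a\in A$ write $a=a_1+a_2$ with $a_1\in\bar A$, $a_2\in\mathrm{rad}(A)$; similarly $b=b_1+b_2$ for $b\in B$. This algebra is called the trivially twisted tensor product and denoted $A\otimes_0 B$. *)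

theory Defs
  imports Main "HOL.Vector_Spaces"
begin

definition k_algebra :: "('k::field \<Rightarrow> 'a::ring_1 \<Rightarrow> 'a) \<Rightarrow> bool" where
  "k_algebra s \<longleftrightarrow> vector_space s \<and>
     (\<forall>c x y. s c (x * y) = s c x * y \<and> s c (x * y) = x * s c y)"

definition is_basis :: "('k::field \<Rightarrow> 'v::ab_group_add \<Rightarrow> 'v) \<Rightarrow> 'v set \<Rightarrow> bool" where
  "is_basis s X \<longleftrightarrow> \<not> module.dependent s X \<and> module.span s X = UNIV"

definition fin_dim :: "('k::field \<Rightarrow> 'v::ab_group_add \<Rightarrow> 'v) \<Rightarrow> bool" where
  "fin_dim s \<longleftrightarrow> (\<exists>X. finite X \<and> is_basis s X)"

definition fd_algebra :: "('k::field \<Rightarrow> 'a::ring_1 \<Rightarrow> 'a) \<Rightarrow> bool" where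
  "fd_algebra s \<longleftrightarrow> k_algebra s \<and> fin_dim s"

definition left_ideal :: "('k::field \<Rightarrow> 'a::ring_1 \<Rightarrow> 'a) \<Rightarrow> 'a set \<Rightarrow> bool" where
  "left_ideal s L \<longleftrightarrow> module.subspace s L \<and> (\<forall>a x. x \<in> L \<longrightarrow> a * x \<in> L)"

definition maximal_left_ideal :: "('k::field \<Rightarrow> 'a::ring_1 \<Rightarrow> 'a) \<Rightarrow> 'a set \<Rightarrow> bool" where
  "maximal_left_ideal s L \<longleftrightarrow> left_ideal s L \<and> L \<noteq> UNIV \<and>
     (\<forall>J. left_ideal s J \<and> L \<subseteq> J \<longrightarrow> J = L \<or> J = UNIV)"

definition jac_rad :: "('k::field \<Rightarrow> 'a::ring_1 \<Rightarrow> 'a) \<Rightarrow> 'a set" where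
  "jac_rad s = \<Inter> {L. maximal_left_ideal s L}"

text \<open>A left A-module with carrier M (a set of elements of some type 'm), addition pl,
  zero z and action act.  Its k-vector space structure is c \<cdot> m = act (s c 1) m.\<close>
definition left_module ::
  "('k::field \<Rightarrow> 'a::ring_1 \<Rightarrow> 'a) \<Rightarrow> 'm set \<Rightarrow> ('m \<Rightarrow> 'm \<Rightarrow> 'm) \<Rightarrow> 'm \<Rightarrow> ('a \<Rightarrow> 'm \<Rightarrow> 'm) \<Rightarrow> bool"
where
  "left_module s M pl z act \<longleftrightarrow>
     z \<in> M \<and>
     (\<forall>x\<in>M. \<forall>y\<in>M. pl x y \<in> M) \<and>
     (\<forall>x\<in>M. \<forall>y\<in>M. \<forall>w\<in>M. pl (pl x y) w = pl x (pl y w)) \<and>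
     (\<forall>x\<in>M. \<forall>y\<in>M. pl x y = pl y x) \<and>
     (\<forall>x\<in>M. pl z x = x) \<and>
     (\<forall>x\<in>M. \<exists>y\<in>M. pl x y = z) \<and>
     (\<forall>a. \<forall>x\<in>M. act a x \<in> M) \<and>
     (\<forall>x\<in>M. act 1 x = x) \<and>
     (\<forall>a b. \<forall>x\<in>M. act (a * b) x = act a (act b x)) \<and>
     (\<forall>a b. \<forall>x\<in>M. act (a + b) x = pl (act a x) (act b x)) \<and>
     (\<forall>a. \<forall>x\<in>M. \<forall>y\<in>M. act a (pl x y) = pl (act a x) (act a y))"

definition submodule :: "'m set \<Rightarrow> 'm set \<Rightarrow> ('m \<Rightarrow> 'm \<Rightarrow> 'm) \<Rightarrow> 'm \<Rightarrow> ('a \<Rightarrow> 'm \<Rightarrow> 'm) \<Rightarrow> bool"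
where
  "submodule N M pl z act \<longleftrightarrow> N \<subseteq> M \<and> z \<in> N \<and>
     (\<forall>x\<in>N. \<forall>y\<in>N. pl x y \<in> N) \<and> (\<forall>a. \<forall>x\<in>N. act a x \<in> N)"

definition simple_module ::
  "('k::field \<Rightarrow> 'a::ring_1 \<Rightarrow> 'a) \<Rightarrow> 'm set \<Rightarrow> ('m \<Rightarrow> 'm \<Rightarrow> 'm) \<Rightarrow> 'm \<Rightarrow> ('a \<Rightarrow> 'm \<Rightarrow> 'm) \<Rightarrow> bool"
where
  "simple_module s M pl z act \<longleftrightarrow> left_module s M pl z act \<and> M \<noteq> {z} \<and>
     (\<forall>N. submodule N M pl z act \<longrightarrow> N = {z} \<or> N = M)"

definition one_dimensional ::
  "('k::field \<Rightarrow> 'a::ring_1 \<Rightarrow> 'a) \<Rightarrow> 'm set \<Rightarrow> 'm \<Rightarrow> ('a \<Rightarrow> 'm \<Rightarrow> 'm) \<Rightarrow> bool"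
where
  "one_dimensional s M z act \<longleftrightarrow>
     (\<exists>m\<in>M. m \<noteq> z \<and> (\<forall>x\<in>M. \<exists>c. x = act (s c 1) m))"

text \<open>Every simple module over A is
  isomorphic to A/L for a maximal left ideal L, and A/L injects into A (choice of coset
  representatives), so it suffices (and is equivalent) to quantify over modules whose carrier
  is a subset of the underlying type 'a of A.\<close>
definition elementary :: "('k::field \<Rightarrow> 'a::ring_1 \<Rightarrow> 'a) \<Rightarrow> bool" where
  "elementary s \<longleftrightarrow>
     (\<forall>(M::'a set) pl z act. simple_module s M pl z act \<longrightarrow> one_dimensional s M z act)"

definition subalgebra :: "('k::field \<Rightarrow> 'a::ring_1 \<Rightarrow> 'a) \<Rightarrow> 'a set \<Rightarrow> bool" where
  "subalgebra s S \<longleftrightarrow> module.subspace s S \<and> 1 \<in> S \<and> (\<forall>x\<in>S. \<forall>y\<in>S. x * y \<in> S)"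

definition radical_splitting :: "('k::field \<Rightarrow> 'a::ring_1 \<Rightarrow> 'a) \<Rightarrow> 'a set \<Rightarrow> bool" where
  "radical_splitting s S \<longleftrightarrow> subalgebra s S \<and> S \<inter> jac_rad s = {0} \<and>
     (\<forall>a. \<exists>x\<in>S. \<exists>y\<in>jac_rad s. a = x + y)"

text \<open>Components a = a1 + a2 with a1 in Abar and a2 in rad(A).\<close>
definition comp1 :: "('k::field \<Rightarrow> 'a::ring_1 \<Rightarrow> 'a) \<Rightarrow> 'a set \<Rightarrow> 'a \<Rightarrow> 'a" where
  "comp1 s S a = (THE x. x \<in> S \<and> a - x \<in> jac_rad s)"

definition comp2 :: "('k::field \<Rightarrow> 'a::ring_1 \<Rightarrow> 'a) \<Rightarrow> 'a set \<Rightarrow> 'a \<Rightarrow> 'a" where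
  "comp2 s S a = a - comp1 s S a"

definition bilinear ::
  "('k::field \<Rightarrow> 'u::ab_group_add \<Rightarrow> 'u) \<Rightarrow> ('k \<Rightarrow> 'v::ab_group_add \<Rightarrow> 'v) \<Rightarrow>
   ('k \<Rightarrow> 'w::ab_group_add \<Rightarrow> 'w) \<Rightarrow> ('u \<Rightarrow> 'v \<Rightarrow> 'w) \<Rightarrow> bool" where
  "bilinear s1 s2 s3 f \<longleftrightarrow>
     (\<forall>y. Vector_Spaces.linear s1 s3 (\<lambda>x. f x y)) \<and> (\<forall>x. Vector_Spaces.linear s2 s3 (\<lambda>y. f x y))"

definition is_tensor_product ::
  "('k::field \<Rightarrow> 'u::ab_group_add \<Rightarrow> 'u) \<Rightarrow> ('k \<Rightarrow> 'v::ab_group_add \<Rightarrow> 'v) \<Rightarrow>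
   ('k \<Rightarrow> 't::ab_group_add \<Rightarrow> 't) \<Rightarrow> ('u \<Rightarrow> 'v \<Rightarrow> 't) \<Rightarrow> bool" where
  "is_tensor_product s1 s2 s3 tp \<longleftrightarrow> vector_space s3 \<and> bilinear s1 s2 s3 tp \<and>
     (\<exists>X Y. is_basis s1 X \<and> is_basis s2 Y \<and>
        inj_on (\<lambda>(x, y). tp x y) (X \<times> Y) \<and> is_basis s3 ((\<lambda>(x, y). tp x y) ` (X \<times> Y)))"

end

theory Submission
  imports Defs
begin


lemma kalg_vs: "k_algebra s \<Longrightarrow> vector_space s" by (simp add: k_algebra_def)

lemma subspace_iff: "vector_space s \<Longrightarrow> module.subspace s L \<longleftrightarrow>
   0 \<in> L \<and> (\<forall>x\<in>L. \<forall>y\<in>L. x + y \<in> L) \<and> (\<forall>c. \<forall>x\<in>L. s c x \<in> L)"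
proof -
  assume "vector_space s"
  then interpret vector_space s .
  show ?thesis by (rule subspace_def)
qed

lemma jac_subspace:
  assumes "k_algebra s" shows "module.subspace s (jac_rad s)"
proof -
  have vs: "vector_space s" using assms kalg_vs by blast
  interpret vector_space s by fact
  show ?thesis unfolding jac_rad_def
    by (rule subspace_Inter) (simp add: maximal_left_ideal_def left_ideal_def)
qed

lemma jac_left: "x \<in> jac_rad s \<Longrightarrow> a * x \<in> jac_rad s"
  by (auto simp: jac_rad_def maximal_left_ideal_def left_ideal_def)

lemma jac_right:
  assumes ka: "k_algebra s" and x: "x \<in> jac_rad s"
  shows "x * r \<in> jac_rad s"
  unfolding jac_rad_def
proof
  fix L assume "L \<in> {L. maximal_left_ideal s L}"
  hence L: "maximal_left_ideal s L" by simp
  have vs: "vector_space s" using ka kalg_vs by blast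
  have sc: "\<And>c x y. s c (x * y) = s c x * y" using ka by (simp add: k_algebra_def)
  have sd: "\<And>c x y. s c (x + y) = s c x + s c y"
    using vs by (simp add: vector_space_def module_def)
  from L have LI: "left_ideal s L" and LU: "L \<noteq> UNIV"
    and Lmax: "\<And>J. left_ideal s J \<Longrightarrow> L \<subseteq> J \<Longrightarrow> J = L \<or> J = UNIV"
    by (auto simp: maximal_left_ideal_def)
  have L0: "0 \<in> L" and Ladd: "\<And>x y. x \<in> L \<Longrightarrow> y \<in> L \<Longrightarrow> x + y \<in> L"
    and Lsc: "\<And>c x. x \<in> L \<Longrightarrow> s c x \<in> L" and Lm: "\<And>a x. x \<in> L \<Longrightarrow> a * x \<in> L"
    using LI by (auto simp: left_ideal_def subspace_iff[OF vs])
  show "x * r \<in> L"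
  proof (cases "r \<in> L")
    case True thus ?thesis using Lm by blast
  next
    case False
    define Q where "Q = {a. a * r \<in> L}"
    have QI: "left_ideal s Q"
      unfolding left_ideal_def subspace_iff[OF vs] Q_def
      using L0 Ladd Lsc Lm by (auto simp: distrib_right sc[symmetric] mult.assoc)
    have QU: "Q \<noteq> UNIV" using False by (metis (mono_tags) Q_def UNIV_I mem_Collect_eq mult_1_left)
    have "maximal_left_ideal s Q"
      unfolding maximal_left_ideal_def
    proof (intro conjI QI QU allI impI)
      fix J assume "left_ideal s J \<and> Q \<subseteq> J"
      hence JI: "left_ideal s J" and QJ: "Q \<subseteq> J" by auto
      have J0: "0 \<in> J" and Jadd: "\<And>x y. x \<in> J \<Longrightarrow> y \<in> J \<Longrightarrow> x + y \<in> J"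
        and Jm: "\<And>a x. x \<in> J \<Longrightarrow> a * x \<in> J"
        using JI by (auto simp: left_ideal_def subspace_iff[OF vs])
      show "J = Q \<or> J = UNIV"
      proof (cases "J \<subseteq> Q")
        case True thus ?thesis using QJ by auto
      next
        case False
        then obtain j where jJ: "j \<in> J" and jQ: "j \<notin> Q" by auto
        define K where "K = {l + c * (j * r) | l c. l \<in> L}"
        have Kmem: "\<And>l c. l \<in> L \<Longrightarrow> l + c * (j * r) \<in> K" unfolding K_def by blast
        have KI: "left_ideal s K"
          unfolding left_ideal_def subspace_iff[OF vs]
        proof (intro conjI ballI allI impI)
          show "0 \<in> K" using Kmem[OF L0, of 0] by simp
          fix u v assume "u \<in> K" "v \<in> K"
          then obtain l c l' c' where "u = l + c * (j * r)" "l \<in> L" "v = l' + c' * (j * r)" "l' \<in> L"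
            unfolding K_def by auto
          hence "u + v = (l + l') + (c + c') * (j * r)" by (simp add: algebra_simps)
          thus "u + v \<in> K" using Kmem Ladd \<open>l \<in> L\<close> \<open>l' \<in> L\<close> by metis
        next
          fix c u assume "u \<in> K"
          then obtain l d where "u = l + d * (j * r)" "l \<in> L" unfolding K_def by auto
          hence "s c u = s c l + s c d * (j * r)" by (simp add: sd sc)
          thus "s c u \<in> K" using Kmem Lsc \<open>l \<in> L\<close> by metis
        next
          fix a u assume "u \<in> K"
          then obtain l d where "u = l + d * (j * r)" "l \<in> L" unfolding K_def by auto
          hence "a * u = a * l + (a * d) * (j * r)" by (simp add: algebra_simps)
          thus "a * u \<in> K" using Kmem Lm \<open>l \<in> L\<close> by metis
        qed
        have LK: "L \<subseteq> K" using Kmem[of _ 0] by auto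
        have "j * r \<in> K" using Kmem[OF L0, of 1] by simp
        moreover have "j * r \<notin> L" using jQ by (simp add: Q_def)
        ultimately have "K = UNIV" using Lmax[OF KI LK] by auto
        have "a \<in> J" for a
        proof -
          have "a * r \<in> K" using \<open>K = UNIV\<close> by simp
          then obtain l c where e: "a * r = l + c * (j * r)" "l \<in> L" unfolding K_def by auto
          have "(a - c * j) * r = l" using e(1) by (simp add: algebra_simps)
          hence "a - c * j \<in> Q" using e(2) by (simp add: Q_def)
          hence "a - c * j \<in> J" using QJ by auto
          hence "(a - c * j) + c * j \<in> J" using Jadd Jm jJ by blast
          thus ?thesis by simp
        qed
        thus ?thesis by auto
      qed
    qed
    hence "x \<in> Q" using x by (auto simp: jac_rad_def)
    thus ?thesis by (simp add: Q_def)
  qed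
qed



context
  fixes s :: "'k::field \<Rightarrow> 'a::ring_1 \<Rightarrow> 'a" and S :: "'a set"
  assumes ka: "k_algebra s" and rs: "radical_splitting s S"
begin

interpretation V: vector_space s using ka kalg_vs by blast

lemma S_sub: "V.subspace S" using rs by (simp add: radical_splitting_def subalgebra_def)
lemma J_sub: "V.subspace (jac_rad s)" using jac_subspace[OF ka] .

lemma comp1_uniq: "x \<in> S \<Longrightarrow> a - x \<in> jac_rad s \<Longrightarrow> x' \<in> S \<Longrightarrow> a - x' \<in> jac_rad s \<Longrightarrow> x = x'"
proof -
  assume h: "x \<in> S" "a - x \<in> jac_rad s" "x' \<in> S" "a - x' \<in> jac_rad s"
  have "x - x' \<in> S" using V.subspace_diff[OF S_sub h(1,3)] .
  moreover have "(a - x') - (a - x) \<in> jac_rad s" using V.subspace_diff[OF J_sub h(4,2)] .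
  hence "x - x' \<in> jac_rad s" by simp
  ultimately have "x - x' \<in> S \<inter> jac_rad s" by blast
  moreover have "S \<inter> jac_rad s = {0}" using rs by (simp add: radical_splitting_def)
  ultimately have "x - x' = 0" by blast
  thus ?thesis by simp
qed

lemma comp1_prop: "comp1 s S a \<in> S \<and> a - comp1 s S a \<in> jac_rad s"
proof -
  have "\<exists>x\<in>S. \<exists>y\<in>jac_rad s. a = x + y" using rs by (simp add: radical_splitting_def)
  then obtain x y where "x \<in> S" "y \<in> jac_rad s" "a = x + y" by blast
  hence ex: "x \<in> S \<and> a - x \<in> jac_rad s" by simp
  show ?thesis unfolding comp1_def
    by (rule theI[of _ x]) (use ex comp1_uniq in blast)+
qed

lemma comp1_eq: "x \<in> S \<Longrightarrow> a - x \<in> jac_rad s \<Longrightarrow> comp1 s S a = x"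
  using comp1_uniq comp1_prop by blast

lemma comp1_add: "comp1 s S (a + b) = comp1 s S a + comp1 s S b"
proof (rule comp1_eq)
  show "comp1 s S a + comp1 s S b \<in> S" using V.subspace_add[OF S_sub] comp1_prop by blast
  have "(a - comp1 s S a) + (b - comp1 s S b) \<in> jac_rad s" using V.subspace_add[OF J_sub] comp1_prop by blast
  thus "a + b - (comp1 s S a + comp1 s S b) \<in> jac_rad s" by (simp add: algebra_simps)
qed

lemma comp1_diff: "comp1 s S (a - b) = comp1 s S a - comp1 s S b"
  using comp1_add[of "a - b" b] by (simp add: algebra_simps)

lemma comp1_scale: "comp1 s S (s c a) = s c (comp1 s S a)"
proof (rule comp1_eq)
  show "s c (comp1 s S a) \<in> S" using V.subspace_scale[OF S_sub] comp1_prop by blast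
  have "s c (a - comp1 s S a) \<in> jac_rad s" using V.subspace_scale[OF J_sub] comp1_prop by blast
  thus "s c a - s c (comp1 s S a) \<in> jac_rad s" by (simp add: V.scale_right_diff_distrib)
qed

lemma comp1_mult: "comp1 s S (a * b) = comp1 s S a * comp1 s S b"
proof (rule comp1_eq)
  show "comp1 s S a * comp1 s S b \<in> S" using rs comp1_prop
    by (auto simp: radical_splitting_def subalgebra_def)
  have "(a - comp1 s S a) * b \<in> jac_rad s" using jac_right[OF ka] comp1_prop by blast
  moreover have "comp1 s S a * (b - comp1 s S b) \<in> jac_rad s" using jac_left comp1_prop by blast
  ultimately have "(a - comp1 s S a) * b + comp1 s S a * (b - comp1 s S b) \<in> jac_rad s"
    using V.subspace_add[OF J_sub] by blast
  thus "a * b - comp1 s S a * comp1 s S b \<in> jac_rad s" by (simp add: algebra_simps)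
qed

lemma comp1_idem: "comp1 s S (comp1 s S a) = comp1 s S a"
  by (rule comp1_eq) (use comp1_prop V.subspace_0[OF J_sub] in auto)

lemma comp1_one: "comp1 s S 1 = 1"
  by (rule comp1_eq) (use rs V.subspace_0[OF J_sub] in \<open>auto simp: radical_splitting_def subalgebra_def\<close>)

end

lemma lin_eq:
  assumes "vector_space s1" "vector_space s2" "Vector_Spaces.linear s1 s2 f" "Vector_Spaces.linear s1 s2 g"
    "module.span s1 B = UNIV" "\<And>b. b \<in> B \<Longrightarrow> f b = g b"
  shows "f x = g x"
proof -
  interpret vector_space_pair s1 s2 using assms(1,2) by (simp add: vector_space_pair_def)
  show ?thesis by (rule linear_eq_on[OF assms(3,4)]) (use assms(5,6) in auto)
qed

lemma linI:
  assumes "vector_space s1" "vector_space s2" "\<And>x y. f (x + y) = f x + f y" "\<And>c x. f (s1 c x) = s2 c (f x)"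
  shows "Vector_Spaces.linear s1 s2 f"
  using assms by (simp add: linear_iff)



theorem mainTheorem3:
  fixes sA :: "'k::field \<Rightarrow> 'a::ring_1 \<Rightarrow> 'a"
    and sB :: "'k \<Rightarrow> 'b::ring_1 \<Rightarrow> 'b"
    and sT :: "'k \<Rightarrow> 't::ab_group_add \<Rightarrow> 't"
    and Abar :: "'a set" and Bbar :: "'b set"
    and tp :: "'a \<Rightarrow> 'b \<Rightarrow> 't"
  assumes "fd_algebra sA" and "elementary sA" and "radical_splitting sA Abar"
    and "fd_algebra sB" and "elementary sB" and "radical_splitting sB Bbar"
    and "is_tensor_product sA sB sT tp"
  shows "(\<forall>a b a' b'.
            tp (a * a') (comp1 sB Bbar b * b') + tp (a * comp1 sA Abar a') (comp2 sB Bbar b * b')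
          = tp (a * a') (b * b') - tp (a * comp2 sA Abar a') (comp2 sB Bbar b * b'))
       \<and> (\<exists>mu. bilinear sT sT sT mu \<and>
            (\<forall>a b a' b'. mu (tp a b) (tp a' b') =
               tp (a * a') (comp1 sB Bbar b * b') + tp (a * comp1 sA Abar a') (comp2 sB Bbar b * b')))
       \<and> (\<forall>mu. bilinear sT sT sT mu \<and>
            (\<forall>a b a' b'. mu (tp a b) (tp a' b') =
               tp (a * a') (comp1 sB Bbar b * b') + tp (a * comp1 sA Abar a') (comp2 sB Bbar b * b'))
          \<longrightarrow> (\<forall>x y z. mu (mu x y) z = mu x (mu y z)) \<and>
              (\<forall>x. mu (tp 1 1) x = x \<and> mu x (tp 1 1) = x))"
proof -
  have kA: "k_algebra sA" and kB: "k_algebra sB" using assms(1,4) by (auto simp: fd_algebra_def)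
  have vsA: "vector_space sA" and vsB: "vector_space sB" using kA kB kalg_vs by blast+
  have vsT: "vector_space sT" and bil: "bilinear sA sB sT tp"
    using assms(7) by (auto simp: is_tensor_product_def)
  interpret TA: vector_space sA by fact
  interpret TB: vector_space sB by fact
  interpret T: vector_space sT by fact
  obtain X Y where X: "is_basis sA X" and Y: "is_basis sB Y"
    and inj: "inj_on (\<lambda>(x, y). tp x y) (X \<times> Y)"
    and Z: "is_basis sT ((\<lambda>(x, y). tp x y) ` (X \<times> Y))"
    using assms(7) unfolding is_tensor_product_def by blast
  define Z where "Z = (\<lambda>(x, y). tp x y) ` (X \<times> Y)"
  have tpL_add: "\<And>x y z. tp (x + y) z = tp x z + tp y z"
   and tpL_sc: "\<And>c x z. tp (sA c x) z = sT c (tp x z)"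
   and tpR_add: "\<And>x y z. tp z (x + y) = tp z x + tp z y"
   and tpR_sc: "\<And>c x z. tp z (sB c x) = sT c (tp z x)"
    using bil by (auto simp: bilinear_def linear_iff)
  have tpL_diff: "\<And>x y z. tp (x - y) z = tp x z - tp y z"
    by (metis tpL_add diff_add_cancel add_diff_cancel)
  have tpR_diff: "\<And>x y z. tp z (x - y) = tp z x - tp z y"
    by (metis tpR_add diff_add_cancel add_diff_cancel)
  note c1A = comp1_add[OF kA assms(3)] comp1_diff[OF kA assms(3)] comp1_scale[OF kA assms(3)]
    comp1_mult[OF kA assms(3)] comp1_idem[OF kA assms(3)] comp1_one[OF kA assms(3)]
  note c1B = comp1_add[OF kB assms(6)] comp1_diff[OF kB assms(6)] comp1_scale[OF kB assms(6)]
    comp1_mult[OF kB assms(6)] comp1_idem[OF kB assms(6)] comp1_one[OF kB assms(6)]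
  have scA: "\<And>c x y. sA c x * y = sA c (x * y)" "\<And>c x y. x * sA c y = sA c (x * y)"
    using kA unfolding k_algebra_def by metis+
  have scB: "\<And>c x y. sB c x * y = sB c (x * y)" "\<And>c x y. x * sB c y = sB c (x * y)"
    using kB unfolding k_algebra_def by metis+
  have tpR0: "\<And>z. tp z 0 = 0" using tpR_diff[of _ 0 0] by simp
  have tpL0: "\<And>z. tp 0 z = 0" using tpL_diff[of 0 0] by simp
  note tpr = tpL0 tpR0 tpL_add tpL_sc tpR_add tpR_sc tpL_diff tpR_diff
  have part1: "\<forall>a b a' b'.
            tp (a * a') (comp1 sB Bbar b * b') + tp (a * comp1 sA Abar a') (comp2 sB Bbar b * b')
          = tp (a * a') (b * b') - tp (a * comp2 sA Abar a') (comp2 sB Bbar b * b')"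
    by (simp add: comp2_def algebra_simps tpr)
  have spZ: "T.span Z = UNIV" and indZ: "\<not> T.dependent Z" using Z by (simp_all add: is_basis_def Z_def)
  have zb: "\<And>z. z \<in> Z \<Longrightarrow> \<exists>a b. z = tp a b" by (auto simp: Z_def)
  have part3: "\<forall>mu. bilinear sT sT sT mu \<and>
            (\<forall>a b a' b'. mu (tp a b) (tp a' b') =
               tp (a * a') (comp1 sB Bbar b * b') + tp (a * comp1 sA Abar a') (comp2 sB Bbar b * b'))
          \<longrightarrow> (\<forall>x y z. mu (mu x y) z = mu x (mu y z)) \<and>
              (\<forall>x. mu (tp 1 1) x = x \<and> mu x (tp 1 1) = x)"
  proof (intro allI impI)
    fix mu assume h: "bilinear sT sT sT mu \<and>
            (\<forall>a b a' b'. mu (tp a b) (tp a' b') =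
               tp (a * a') (comp1 sB Bbar b * b') + tp (a * comp1 sA Abar a') (comp2 sB Bbar b * b'))"
    have linL: "\<And>y. Vector_Spaces.linear sT sT (\<lambda>x. mu x y)"
      and linR: "\<And>x. Vector_Spaces.linear sT sT (\<lambda>y. mu x y)" using h by (auto simp: bilinear_def)
    have muL_add: "\<And>x y z. mu (x + y) z = mu x z + mu y z"
     and muL_sc: "\<And>c x z. mu (sT c x) z = sT c (mu x z)"
     and muR_add: "\<And>x y z. mu z (x + y) = mu z x + mu z y"
     and muR_sc: "\<And>c x z. mu z (sT c x) = sT c (mu z x)"
      using linL linR by (auto simp: linear_iff)
    have muL_diff: "\<And>x y z. mu (x - y) z = mu x z - mu y z"
      by (metis muL_add diff_add_cancel add_diff_cancel)
    have muR_diff: "\<And>x y z. mu z (x - y) = mu z x - mu z y"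
      by (metis muR_add diff_add_cancel add_diff_cancel)
    have form: "\<And>a b a' b'. mu (tp a b) (tp a' b') =
        tp (a * a') (comp1 sB Bbar b * b') + tp (a * comp1 sA Abar a') ((b - comp1 sB Bbar b) * b')"
      using h by (simp add: comp2_def)
    have pure: "\<And>a b a' b' a'' b''.
        mu (mu (tp a b) (tp a' b')) (tp a'' b'') = mu (tp a b) (mu (tp a' b') (tp a'' b''))"
      by (simp add: form muL_add muR_add muL_diff muR_diff tpr c1A c1B algebra_simps)
    have s1: "mu (mu x y) z = mu x (mu y z)" if "x \<in> Z" "y \<in> Z" for x y z
    proof -
      have "(\<lambda>z. mu (mu x y) z) z = (\<lambda>z. mu x (mu y z)) z"
      proof (rule lin_eq[where f="\<lambda>z. mu (mu x y) z" and g="\<lambda>z. mu x (mu y z)", OF vsT vsT _ _ spZ])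
        show "Vector_Spaces.linear sT sT (\<lambda>z. mu (mu x y) z)" by (rule linR)
        show "Vector_Spaces.linear sT sT (\<lambda>z. mu x (mu y z))"
          by (rule linI[OF vsT vsT]) (simp_all add: muR_add muR_sc)
        show "mu (mu x y) b = mu x (mu y b)" if "b \<in> Z" for b
          using zb[OF that] zb[OF \<open>x \<in> Z\<close>] zb[OF \<open>y \<in> Z\<close>] pure by auto
      qed
      thus ?thesis by simp
    qed
    have s2: "mu (mu x y) z = mu x (mu y z)" if "x \<in> Z" for x y z
    proof -
      have "(\<lambda>y. mu (mu x y) z) y = (\<lambda>y. mu x (mu y z)) y"
      proof (rule lin_eq[where f="\<lambda>y. mu (mu x y) z" and g="\<lambda>y. mu x (mu y z)", OF vsT vsT _ _ spZ])
        show "Vector_Spaces.linear sT sT (\<lambda>y. mu (mu x y) z)"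
          by (rule linI[OF vsT vsT]) (simp_all add: muR_add muR_sc muL_add muL_sc)
        show "Vector_Spaces.linear sT sT (\<lambda>y. mu x (mu y z))"
          by (rule linI[OF vsT vsT]) (simp_all add: muR_add muR_sc muL_add muL_sc)
        show "mu (mu x b) z = mu x (mu b z)" if "b \<in> Z" for b
          using s1[OF \<open>x \<in> Z\<close> that] .
      qed
      thus ?thesis by simp
    qed
    have s3: "mu (mu x y) z = mu x (mu y z)" for x y z
    proof -
      have "(\<lambda>x. mu (mu x y) z) x = (\<lambda>x. mu x (mu y z)) x"
      proof (rule lin_eq[where f="\<lambda>x. mu (mu x y) z" and g="\<lambda>x. mu x (mu y z)", OF vsT vsT _ _ spZ])
        show "Vector_Spaces.linear sT sT (\<lambda>x. mu (mu x y) z)"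
          by (rule linI[OF vsT vsT]) (simp_all add: muR_add muR_sc muL_add muL_sc)
        show "Vector_Spaces.linear sT sT (\<lambda>x. mu x (mu y z))"
          by (rule linI[OF vsT vsT]) (simp_all add: muR_add muR_sc muL_add muL_sc)
        show "mu (mu b y) z = mu b (mu y z)" if "b \<in> Z" for b
          using s2[OF that] .
      qed
      thus ?thesis by simp
    qed
    have u1: "mu (tp 1 1) x = x" for x
    proof -
      have "(\<lambda>x. mu (tp 1 1) x) x = (\<lambda>x. x) x"
      proof (rule lin_eq[where f="\<lambda>x. mu (tp 1 1) x" and g="\<lambda>x. x", OF vsT vsT _ _ spZ])
        show "Vector_Spaces.linear sT sT (\<lambda>x. mu (tp 1 1) x)" by (rule linR)
        show "Vector_Spaces.linear sT sT (\<lambda>x. x)" by (rule linI[OF vsT vsT]) simp_all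
        show "mu (tp 1 1) b = b" if "b \<in> Z" for b
          using zb[OF that] by (auto simp: form c1A c1B tpr)
      qed
      thus ?thesis by simp
    qed
    have u2: "mu x (tp 1 1) = x" for x
    proof -
      have "(\<lambda>x. mu x (tp 1 1)) x = (\<lambda>x. x) x"
      proof (rule lin_eq[where f="\<lambda>x. mu x (tp 1 1)" and g="\<lambda>x. x", OF vsT vsT _ _ spZ])
        show "Vector_Spaces.linear sT sT (\<lambda>x. mu x (tp 1 1))" by (rule linL)
        show "Vector_Spaces.linear sT sT (\<lambda>x. x)" by (rule linI[OF vsT vsT]) simp_all
        show "mu b (tp 1 1) = b" if "b \<in> Z" for b
          using zb[OF that] by (auto simp: form c1A c1B tpr algebra_simps)
      qed
      thus ?thesis by simp
    qed
    show "(\<forall>x y z. mu (mu x y) z = mu x (mu y z)) \<and> (\<forall>x. mu (tp 1 1) x = x \<and> mu x (tp 1 1) = x)"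
      using s3 u1 u2 by blast
  qed
  obtain X0 where X0: "finite X0" "is_basis sA X0" using assms(1) by (auto simp: fd_algebra_def fin_dim_def)
  obtain Y0 where Y0: "finite Y0" "is_basis sB Y0" using assms(4) by (auto simp: fd_algebra_def fin_dim_def)
  have spX: "TA.span X = UNIV" and indX: "\<not> TA.dependent X" using X by (simp_all add: is_basis_def)
  have spY: "TB.span Y = UNIV" and indY: "\<not> TB.dependent Y" using Y by (simp_all add: is_basis_def)
  have finX: "finite X" using TA.independent_span_bound[OF X0(1) indX] X0(2) by (simp add: is_basis_def)
  have finY: "finite Y" using TB.independent_span_bound[OF Y0(1) indY] Y0(2) by (simp add: is_basis_def)
  have finZ: "finite Z" using finX finY by (simp add: Z_def)
  define F where "F a b a' b' = tp (a * a') (comp1 sB Bbar b * b') + tp (a * comp1 sA Abar a') (comp2 sB Bbar b * b')"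
    for a b a' b'
  define pre where "pre = inv_into (X \<times> Y) (\<lambda>(x, y). tp x y)"
  define g where "g z z' = F (fst (pre z)) (snd (pre z)) (fst (pre z')) (snd (pre z'))" for z z'
  define R where "R = T.representation Z"
  define mu where "mu u v = (\<Sum>z\<in>Z. \<Sum>z'\<in>Z. sT (R u z * R v z') (g z z'))" for u v
  have Radd: "\<And>u v. R (u + v) = (\<lambda>b. R u b + R v b)"
    unfolding R_def using T.representation_add[OF indZ] spZ by auto
  have Rsc: "\<And>c u. R (sT c u) = (\<lambda>b. c * R u b)"
    unfolding R_def using T.representation_scale[OF indZ] spZ by auto
  have muL_add: "\<And>x y z. mu (x + y) z = mu x z + mu y z"
    by (simp add: mu_def Radd distrib_right T.scale_left_distrib sum.distrib)
  have muR_add: "\<And>x y z. mu z (x + y) = mu z x + mu z y"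
    by (simp add: mu_def Radd distrib_left T.scale_left_distrib sum.distrib)
  have muL_sc: "\<And>c x z. mu (sT c x) z = sT c (mu x z)"
  proof -
    fix c x z
    have "\<And>a b w. sT (c * a * b) w = sT c (sT (a * b) w)" by (simp add: mult.assoc)
    thus "mu (sT c x) z = sT c (mu x z)"
      by (simp add: mu_def Rsc T.scale_sum_right mult.assoc)
  qed
  have muR_sc: "\<And>c x z. mu z (sT c x) = sT c (mu z x)"
  proof -
    fix c x z
    have "\<And>a b w. sT (a * (c * b)) w = sT c (sT (a * b) w)" by (simp add: ac_simps)
    thus "mu z (sT c x) = sT c (mu z x)"
      by (simp add: mu_def Rsc T.scale_sum_right mult.left_commute)
  qed
  have bilmu: "bilinear sT sT sT mu"
    unfolding bilinear_def
    by (intro allI conjI linI[OF vsT vsT]) (simp_all add: muL_add muR_add muL_sc muR_sc)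
  have Rbas: "\<And>p. p \<in> Z \<Longrightarrow> R p = (\<lambda>v. if v = p then 1 else 0)"
    unfolding R_def using T.representation_basis[OF indZ] by blast
  have dsum: "(\<Sum>z\<in>Z. \<Sum>z'\<in>Z. sT ((if z = p then 1 else 0) * (if z' = q then 1 else 0)) (g z z')) = g p q"
    if "p \<in> Z" "q \<in> Z" for p q
  proof -
    have "\<And>z z'. sT ((if z = p then 1 else 0) * (if z' = q then 1 else 0)) (g z z')
       = (if z = p then (if z' = q then g z z' else 0) else 0)" by simp
    moreover have "\<And>z. (\<Sum>z'\<in>Z. if z = p then if z' = q then g z z' else 0 else 0) = (if z = p then g z q else 0)"
      using that finZ by (simp add: sum.delta)
    ultimately show ?thesis using that finZ by (simp add: sum.delta)
  qed
  have b0: "mu (tp x y) (tp x' y') = F x y x' y'" if "x \<in> X" "y \<in> Y" "x' \<in> X" "y' \<in> Y" for x y x' y'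
  proof -
    have m1: "tp x y \<in> Z" "tp x' y' \<in> Z" using that by (auto simp: Z_def)
    have "pre (tp x y) = (x, y)" "pre (tp x' y') = (x', y')"
      unfolding pre_def using inv_into_f_f[OF inj] that by force+
    thus ?thesis unfolding mu_def using dsum[OF m1] Rbas[OF m1(1)] Rbas[OF m1(2)] by (simp add: g_def)
  qed
  note LS = F_def comp2_def algebra_simps tpr c1A c1B scA scB T.scale_right_distrib T.scale_right_diff_distrib
     muL_add muR_add muL_sc muR_sc
  have b1: "mu (tp x y) (tp x' b') = F x y x' b'" if "x \<in> X" "y \<in> Y" "x' \<in> X" for x y x' b'
  proof -
    have "(\<lambda>b'. mu (tp x y) (tp x' b')) b' = (\<lambda>b'. F x y x' b') b'"
      by (rule lin_eq[where f="\<lambda>b'. mu (tp x y) (tp x' b')" and g="\<lambda>b'. F x y x' b'", OF vsB vsT _ _ spY])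
         (auto intro!: linI[OF vsB vsT] simp: LS b0 that)
    thus ?thesis by simp
  qed
  have b2: "mu (tp x y) (tp a' b') = F x y a' b'" if "x \<in> X" "y \<in> Y" for x y a' b'
  proof -
    have "(\<lambda>a'. mu (tp x y) (tp a' b')) a' = (\<lambda>a'. F x y a' b') a'"
      by (rule lin_eq[where f="\<lambda>a'. mu (tp x y) (tp a' b')" and g="\<lambda>a'. F x y a' b'", OF vsA vsT _ _ spX])
         (auto intro!: linI[OF vsA vsT] simp: LS b1 that)
    thus ?thesis by simp
  qed
  have b3: "mu (tp x b) (tp a' b') = F x b a' b'" if "x \<in> X" for x b a' b'
  proof -
    have "(\<lambda>b. mu (tp x b) (tp a' b')) b = (\<lambda>b. F x b a' b') b"
      by (rule lin_eq[where f="\<lambda>b. mu (tp x b) (tp a' b')" and g="\<lambda>b. F x b a' b'", OF vsB vsT _ _ spY])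
         (auto intro!: linI[OF vsB vsT] simp: LS b2 that)
    thus ?thesis by simp
  qed
  have b4: "mu (tp a b) (tp a' b') = F a b a' b'" for a b a' b'
  proof -
    have "(\<lambda>a. mu (tp a b) (tp a' b')) a = (\<lambda>a. F a b a' b') a"
      by (rule lin_eq[where f="\<lambda>a. mu (tp a b) (tp a' b')" and g="\<lambda>a. F a b a' b'", OF vsA vsT _ _ spX])
         (auto intro!: linI[OF vsA vsT] simp: LS b3)
    thus ?thesis by simp
  qed
  have part2: "\<exists>mu. bilinear sT sT sT mu \<and>
            (\<forall>a b a' b'. mu (tp a b) (tp a' b') =
               tp (a * a') (comp1 sB Bbar b * b') + tp (a * comp1 sA Abar a') (comp2 sB Bbar b * b'))"
    using bilmu b4 unfolding F_def by blast
  show ?thesis using part1 part2 part3 by blast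
qed

end
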